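(* Let $\mu$ be a probability measure on $\mathbb R^d$ absolutely continuous with Lebesgue density $f_\mu$. Let $\upsilon\in(0,1)$, $\xi\in(0,\infty)$, $\beta\in(0,\infty)$, $x\in\mathbb R^d$, $r\in(0,1/2]$ be such that $\bar B_\infty(x,r)\cap\mathcal R_\upsilon(\mu)\cap\{f_\mu\ge\xi\}\ne\emptyset$, and let $h\in[2r,1]$. Then $\mu(\bar B_\infty(x,h))\ge\upsilon\xi(h/2)^d$. If in addition $\beta\in(0,1]$ or $3r\le\upsilon h$, then $$\lambda_{\min}\Bigl(\int_{\bar B_\infty(x,h)}\Phi^\beta_{x,h}(z)\Phi^\beta_{x,h}(z)^\top\,d\mu(z)\Bigr)\ge2^{-(3d+1)}\,\upsilon\,c^0_{\min}\,\mu(\bar B_\infty(x,h)),$$ where $c^0_{\min}:=c_{\min}(d,\beta,2^{-(d+1)}\upsilon)\in(0,1]$.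
   Context: $\bar B_\infty(x,r)$ and $B_\infty(x,r)$ denote closed and open sup-norm balls. $\mathcal R_\upsilon(\mu):=\bigcap_{r\in(0,1)}\{x:\mu(B_\infty(x,r))\ge\upsilon r^d\sup_{x'\in B_\infty(x,(1+\upsilon)r)}f_\mu(x')\}$. $\mathcal V(\beta):=\{\nu\in\mathbb N_0^d:\sum_j\nu_j\le\lceil\beta\rceil-1\}$; $\Phi^\beta_{x,h}(z):=(((z-x)/h)^\nu)_{\nu\in\mathcal V(\beta)}$ with $w^\nu=\prod_jw_j^{\nu_j}$. For $a\in(0,1)$, $c_{\min}(d,\beta,a):=1\wedge\inf_K\lambda_{\min}(\int_K\Phi^\beta_{0,1}(z)\Phi^\beta_{0,1}(z)^\top dz)$, infimum over measurable $K\subseteq\bar B_\infty(0,1)$ with Lebesgue measure $\ge a$ (this quantity is positive). $\lambda_{\min}$: smallest eigenvalue. *)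

theory Defs
  imports "HOL-Probability.Probability"
begin

definition cball_inf :: "real^'n \<Rightarrow> real \<Rightarrow> (real^'n) set" where
  "cball_inf x r = {y. \<forall>i. \<bar>y$i - x$i\<bar> \<le> r}"

definition ball_inf :: "real^'n \<Rightarrow> real \<Rightarrow> (real^'n) set" where
  "ball_inf x r = {y. \<forall>i. \<bar>y$i - x$i\<bar> < r}"

definition reg_set :: "real \<Rightarrow> (real^'n) measure \<Rightarrow> (real^'n \<Rightarrow> real) \<Rightarrow> (real^'n) set" where
  "reg_set v M f = (\<Inter>r\<in>{0<..<1}. {x.
      emeasure M (ball_inf x r) \<ge>
        ennreal (v * r ^ CARD('n)) * (SUP x'\<in>ball_inf x ((1 + v) * r). ennreal (f x'))})"

definition multi_idx :: "real \<Rightarrow> ('n::finite \<Rightarrow> nat) set" where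
  "multi_idx \<beta> = {\<nu>. int (\<Sum>j\<in>UNIV. \<nu> j) \<le> \<lceil>\<beta>\<rceil> - 1}"

definition Phi :: "real^'n \<Rightarrow> real \<Rightarrow> real^'n \<Rightarrow> ('n \<Rightarrow> nat) \<Rightarrow> real" where
  "Phi x h z \<nu> = (\<Prod>j\<in>UNIV. ((z$j - x$j) / h) ^ (\<nu> j))"

definition eigenvalues_on :: "'k set \<Rightarrow> ('k \<Rightarrow> 'k \<Rightarrow> real) \<Rightarrow> real set" where
  "eigenvalues_on K A = {l. \<exists>v::'k \<Rightarrow> real. (\<exists>k\<in>K. v k \<noteq> 0) \<and>
       (\<forall>k\<in>K. (\<Sum>j\<in>K. A k j * v j) = l * v k)}"

definition lambda_min :: "'k set \<Rightarrow> ('k \<Rightarrow> 'k \<Rightarrow> real) \<Rightarrow> real" where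
  "lambda_min K A = Inf (eigenvalues_on K A)"

definition gram :: "(real^'n) measure \<Rightarrow> real^'n \<Rightarrow> real \<Rightarrow> ('n \<Rightarrow> nat) \<Rightarrow> ('n \<Rightarrow> nat) \<Rightarrow> real" where
  "gram M x h \<nu> \<nu>' = (\<integral>z. indicator (cball_inf x h) z * (Phi x h z \<nu> * Phi x h z \<nu>') \<partial>M)"

text \<open>c_min(d, beta, a), with d = CARD('n) encoded by the type.\<close>
definition c_min :: "'n::finite itself \<Rightarrow> real \<Rightarrow> real \<Rightarrow> real" where
  "c_min _ \<beta> a = min 1 (Inf {lambda_min (multi_idx \<beta> :: ('n \<Rightarrow> nat) set)
        (\<lambda>\<nu> \<nu>'. \<integral>z. indicator K z * (Phi (0::real^'n) 1 z \<nu> * Phi 0 1 z \<nu>') \<partial>lebesgue) | K.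
        K \<in> sets lebesgue \<and> K \<subseteq> cball_inf (0::real^'n) 1 \<and> emeasure lebesgue K \<ge> ennreal a})"

end

theory Submission
  imports Defs
begin


definition qf :: "'k set \<Rightarrow> ('k \<Rightarrow> 'k \<Rightarrow> real) \<Rightarrow> ('k \<Rightarrow> real) \<Rightarrow> real" where
  "qf K A w = (\<Sum>i\<in>K. \<Sum>j\<in>K. w i * A i j * w j)"

definition nsq :: "'k set \<Rightarrow> ('k \<Rightarrow> real) \<Rightarrow> real" where
  "nsq K w = (\<Sum>i\<in>K. (w i)^2)"

lemma qf_scale: "qf K A (\<lambda>k. c * w k) = c^2 * qf K A w"
  by (simp add: qf_def sum_distrib_left power2_eq_square algebra_simps)

lemma nsq_scale: "nsq K (\<lambda>k. c * w k) = c^2 * nsq K w"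
  by (simp add: nsq_def sum_distrib_left power_mult_distrib)

lemma nsq_nonneg: "nsq K w \<ge> 0" by (simp add: nsq_def sum_nonneg)

lemma nsq_zero: "finite K \<Longrightarrow> nsq K w = 0 \<Longrightarrow> k \<in> K \<Longrightarrow> w k = 0"
  unfolding nsq_def using sum_nonneg_eq_0_iff[of K "\<lambda>i. (w i)^2"] by auto

lemma qf_zero: "(\<forall>k\<in>K. w k = 0) \<Longrightarrow> qf K A w = 0"
  by (simp add: qf_def)

lemma qf_cong: "(\<forall>k\<in>K. w k = w' k) \<Longrightarrow> qf K A w = qf K A w'"
  by (simp add: qf_def)
lemma nsq_cong: "(\<forall>k\<in>K. w k = w' k) \<Longrightarrow> nsq K w = nsq K w'"
  by (simp add: nsq_def)

lemma qf_add:
  assumes sym: "\<forall>i\<in>K. \<forall>j\<in>K. A i j = A j i"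
  shows "qf K A (\<lambda>k. a k + t * u k) = qf K A a + 2 * t * (\<Sum>i\<in>K. u i * (\<Sum>j\<in>K. A i j * a j)) + t^2 * qf K A u"
proof -
  have "qf K A (\<lambda>k. a k + t * u k) = qf K A a + t * (\<Sum>i\<in>K. \<Sum>j\<in>K. u i * A i j * a j)
      + t * (\<Sum>i\<in>K. \<Sum>j\<in>K. a i * A i j * u j) + t^2 * qf K A u"
    by (simp add: qf_def algebra_simps sum.distrib sum_distrib_left power2_eq_square)
  moreover have "(\<Sum>i\<in>K. \<Sum>j\<in>K. a i * A i j * u j) = (\<Sum>i\<in>K. \<Sum>j\<in>K. u i * A i j * a j)"
    apply (subst sum.swap) using sym by (intro sum.cong refl) (simp add: algebra_simps)
  moreover have "(\<Sum>i\<in>K. \<Sum>j\<in>K. u i * A i j * a j) = (\<Sum>i\<in>K. u i * (\<Sum>j\<in>K. A i j * a j))"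
    by (simp add: sum_distrib_left algebra_simps)
  ultimately show ?thesis by (simp add: algebra_simps)
qed

lemma nsq_add: "nsq K (\<lambda>k. a k + t * u k) = nsq K a + 2 * t * (\<Sum>i\<in>K. u i * a i) + t^2 * nsq K u"
  by (simp add: nsq_def algebra_simps sum.distrib sum_distrib_left power2_eq_square)

lemma min_exists:
  fixes K :: "'k set" and A :: "'k \<Rightarrow> 'k \<Rightarrow> real"
  assumes "finite K" "K \<noteq> {}"
  shows "\<exists>w0. nsq K w0 = 1 \<and> (\<forall>w. qf K A w \<ge> qf K A w0 * nsq K w)"
proof -
  let ?X = "product_topology (\<lambda>_. euclideanreal) K"
  let ?P = "PiE K (\<lambda>_. {-1..1::real})"
  let ?S = "{w \<in> topspace ?X. nsq K w \<in> {1}}"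
  have c1: "compactin ?X ?P" by (simp add: compactin_PiE)
  have contn: "continuous_map ?X euclideanreal (nsq K)"
    unfolding nsq_def using assms by (intro continuous_intros) auto
  have contq: "continuous_map ?X euclideanreal (qf K A)"
    unfolding qf_def using assms by (intro continuous_intros) auto
  have cl: "closedin ?X ?S"
    by (rule closedin_continuous_map_preimage[OF contn]) auto
  have sub: "?S \<subseteq> ?P"
  proof
    fix w assume w: "w \<in> ?S"
    have "\<forall>k\<in>K. \<bar>w k\<bar> \<le> 1"
    proof
      fix k assume k: "k \<in> K"
      have "(w k)^2 \<le> nsq K w" unfolding nsq_def
        using member_le_sum[of k K "\<lambda>i. (w i)^2"] k assms by auto
      then have "(w k)^2 \<le> 1^2" using w by simp
      then show "\<bar>w k\<bar> \<le> 1" using abs_le_square_iff[of "w k" 1] by simp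
    qed
    then show "w \<in> ?P" using w by (auto simp: PiE_def Pi_def abs_le_iff)
  qed
  have "compactin ?X ?S" by (rule closed_compactin[OF c1 sub cl])
  then have "compactin euclideanreal (qf K A ` ?S)" by (rule image_compactin[OF _ contq])
  then have cq: "compact (qf K A ` ?S)" by simp
  obtain k0 where k0: "k0 \<in> K" using assms by auto
  let ?e = "restrict (\<lambda>k. if k = k0 then 1 else 0::real) K"
  have "nsq K ?e = nsq K (\<lambda>k. if k = k0 then 1 else 0)" by (rule nsq_cong) simp
  also have "\<dots> = 1"
  proof -
    have "(\<Sum>i\<in>K. ((if i = k0 then 1 else 0::real))^2) = (\<Sum>i\<in>K. (if i = k0 then 1 else 0::real))"
      by (intro sum.cong) auto
    then show ?thesis using assms k0 by (simp add: nsq_def)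
  qed
  finally have "nsq K ?e = 1" .
  then have "?e \<in> ?S" by simp
  then have ne: "qf K A ` ?S \<noteq> {}" by blast
  obtain w0 where w0: "w0 \<in> ?S" and mn: "\<forall>w\<in>?S. qf K A w0 \<le> qf K A w"
    using compact_attains_inf[OF cq ne] by blast
  have "qf K A w \<ge> qf K A w0 * nsq K w" for w
  proof (cases "nsq K w = 0")
    case True
    then have "qf K A w = 0" using nsq_zero[OF assms(1) True] by (intro qf_zero) blast
    then show ?thesis using True by simp
  next
    case False
    then have pos: "nsq K w > 0" using nsq_nonneg[of K w] by linarith
    define c where "c = 1 / sqrt (nsq K w)"
    have c2: "c^2 = 1 / nsq K w" using pos by (simp add: c_def power_divide)
    let ?w = "restrict (\<lambda>k. c * w k) K"
    have "nsq K ?w = c^2 * nsq K w"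
      by (subst nsq_cong[of K ?w "\<lambda>k. c * w k"]) (auto simp: nsq_scale)
    then have "nsq K ?w = 1" using c2 pos by simp
    then have "?w \<in> ?S" by simp
    then have "qf K A w0 \<le> qf K A ?w" using mn by blast
    also have "qf K A ?w = c^2 * qf K A w"
      by (subst qf_cong[of K ?w "\<lambda>k. c * w k"]) (auto simp: qf_scale)
    finally have "qf K A w0 \<le> qf K A w / nsq K w" using c2 by simp
    then show ?thesis using pos by (simp add: field_simps)
  qed
  moreover have "nsq K w0 = 1" using w0 by simp
  ultimately show ?thesis by blast
qed


lemma qf_eig: "(\<forall>k\<in>K. (\<Sum>j\<in>K. A k j * v j) = l * v k) \<Longrightarrow> qf K A v = l * nsq K v"
proof -
  assume h: "\<forall>k\<in>K. (\<Sum>j\<in>K. A k j * v j) = l * v k"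
  have "qf K A v = (\<Sum>i\<in>K. v i * (\<Sum>j\<in>K. A i j * v j))"
    by (simp add: qf_def sum_distrib_left algebra_simps)
  also have "\<dots> = (\<Sum>i\<in>K. l * (v i)^2)" using h by (intro sum.cong) (auto simp: power2_eq_square)
  finally show ?thesis by (simp add: nsq_def sum_distrib_left)
qed

lemma lambda_min_char:
  fixes K :: "'k set" and A :: "'k \<Rightarrow> 'k \<Rightarrow> real"
  assumes fin: "finite K" and ne: "K \<noteq> {}" and sym: "\<forall>i\<in>K. \<forall>j\<in>K. A i j = A j i"
  shows "lambda_min K A \<in> eigenvalues_on K A \<and> (\<forall>w. qf K A w \<ge> lambda_min K A * nsq K w)"
proof -
  obtain w0 where n1: "nsq K w0 = 1" and mn: "\<forall>w. qf K A w \<ge> qf K A w0 * nsq K w"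
    using min_exists[OF fin ne] by blast
  define m where "m = qf K A w0"
  define r where "r k = (\<Sum>j\<in>K. A k j * w0 j) - m * w0 k" for k
  define R where "R = nsq K r"
  define C where "C = qf K A r - m * nsq K r"
  have key: "2 * t * R + t^2 * C \<ge> 0" for t
  proof -
    have "qf K A (\<lambda>k. w0 k + t * r k) \<ge> m * nsq K (\<lambda>k. w0 k + t * r k)"
      using mn unfolding m_def by (rule spec)
    moreover have "(\<Sum>i\<in>K. r i * (\<Sum>j\<in>K. A i j * w0 j)) - m * (\<Sum>i\<in>K. r i * w0 i) = R"
      by (simp add: R_def nsq_def r_def power2_eq_square sum_distrib_left sum_subtractf[symmetric] algebra_simps)
    ultimately show ?thesis
      unfolding qf_add[OF sym] nsq_add C_def using n1 m_def by (simp add: algebra_simps)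
  qed
  have R0: "R = 0"
  proof (rule ccontr)
    assume "R \<noteq> 0"
    then have Rp: "R > 0" using nsq_nonneg[of K r] R_def by linarith
    define a where "a = \<bar>C\<bar> + 1"
    have ap: "a > 0" unfolding a_def by simp
    define b where "b = R / a"
    have Rb: "R = a * b" using ap unfolding b_def by simp
    have bp: "b > 0" using Rp ap unfolding b_def by simp
    have "2 * (- b) * R + (- b)^2 * C \<ge> 0" by (rule key)
    moreover have "2 * (- b) * R + (- b)^2 * C = b^2 * (C - 2 * a)"
      unfolding Rb by (simp add: algebra_simps power2_eq_square)
    ultimately have "b^2 * (C - 2 * a) \<ge> 0" by simp
    then have "C - 2 * a \<ge> 0" using bp by (simp add: zero_le_mult_iff)
    then show False unfolding a_def by (cases "C \<ge> 0") auto
  qed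
  have ev: "\<forall>k\<in>K. (\<Sum>j\<in>K. A k j * w0 j) = m * w0 k"
    using nsq_zero[OF fin R0[unfolded R_def]] r_def by fastforce
  have nz: "\<exists>k\<in>K. w0 k \<noteq> 0"
  proof (rule ccontr)
    assume "\<not> ?thesis"
    then have "\<forall>k\<in>K. w0 k = 0" by blast
    then have "nsq K w0 = 0" unfolding nsq_def by simp
    then show False using n1 by simp
  qed
  have mE: "m \<in> eigenvalues_on K A" unfolding eigenvalues_on_def mem_Collect_eq
    by (rule exI[of _ w0]) (use ev nz in blast)
  have lb: "m \<le> l" if lE: "l \<in> eigenvalues_on K A" for l
  proof -
    obtain v where v: "\<exists>k\<in>K. v k \<noteq> 0" "\<forall>k\<in>K. (\<Sum>j\<in>K. A k j * v j) = l * v k"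
      using lE unfolding eigenvalues_on_def mem_Collect_eq by auto
    have np: "nsq K v > 0"
    proof -
      have "nsq K v \<noteq> 0" using v(1) nsq_zero[OF fin, of v] by auto
      then show ?thesis using nsq_nonneg[of K v] by linarith
    qed
    have "l * nsq K v \<ge> m * nsq K v" using qf_eig[OF v(2)] mn m_def by metis
    then show ?thesis using np by simp
  qed
  have "lambda_min K A = m" unfolding lambda_min_def
    by (rule cInf_eq_minimum[OF mE lb])
  then show ?thesis using mE mn m_def by simp
qed



lemma int_term:
  fixes N :: "'a measure" and g :: "'k \<Rightarrow> 'a \<Rightarrow> real"
  assumes S: "S \<in> sets N" "emeasure N S < \<infinity>"
    and gm: "\<forall>i\<in>K. g i \<in> borel_measurable N" and gb: "\<forall>i\<in>K. \<forall>z\<in>S. \<bar>g i z\<bar> \<le> 1"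
    and ij: "i \<in> K" "j \<in> K"
  shows "integrable N (\<lambda>z. indicator S z * (g i z * g j z))"
proof (rule integrableI_bounded_set[where A=S and B=1])
  show "S \<in> sets N" "emeasure N S < \<infinity>" using S by auto
  show "(\<lambda>z. indicator S z * (g i z * g j z)) \<in> borel_measurable N"
  proof -
    have [measurable]: "g i \<in> borel_measurable N" "g j \<in> borel_measurable N" using gm ij by auto
    show ?thesis using S by measurable
  qed
  show "AE x in N. x \<in> S \<longrightarrow> norm (indicator S x * (g i x * g j x)) \<le> (1::real)"
  proof (rule AE_I2, rule impI)
    fix x assume x: "x \<in> S"
    have "\<bar>g i x\<bar> \<le> 1" "\<bar>g j x\<bar> \<le> 1" using gb ij x by auto
    then have "\<bar>g i x\<bar> * \<bar>g j x\<bar> \<le> 1 * 1" by (intro mult_mono) auto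
    then show "norm (indicator S x * (g i x * g j x)) \<le> (1::real)" using x by (simp add: abs_mult)
  qed
  show "AE x in N. x \<notin> S \<longrightarrow> indicator S x * (g i x * g j x) = 0" by simp
qed

lemma quad_int:
  fixes N :: "'a measure" and g :: "'k \<Rightarrow> 'a \<Rightarrow> real"
  assumes fin: "finite K" and S: "S \<in> sets N" "emeasure N S < \<infinity>"
    and gm: "\<forall>i\<in>K. g i \<in> borel_measurable N" and gb: "\<forall>i\<in>K. \<forall>z\<in>S. \<bar>g i z\<bar> \<le> 1"
  shows "qf K (\<lambda>i j. \<integral>z. indicator S z * (g i z * g j z) \<partial>N) w
          = (\<integral>z. indicator S z * (\<Sum>i\<in>K. w i * g i z)^2 \<partial>N)"
    and "integrable N (\<lambda>z. indicator S z * (\<Sum>i\<in>K. w i * g i z)^2)"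
proof -
  have it: "integrable N (\<lambda>z. indicator S z * (g i z * g j z))" if "i \<in> K" "j \<in> K" for i j
    using int_term[OF S gm gb that] .
  have eq: "indicator S z * (\<Sum>i\<in>K. w i * g i z)^2
      = (\<Sum>i\<in>K. \<Sum>j\<in>K. w i * (indicator S z * (g i z * g j z)) * w j)" for z
    by (simp add: power2_eq_square sum_distrib_left sum_distrib_right algebra_simps)
  have it2: "integrable N (\<lambda>z. w i * (indicator S z * (g i z * g j z)) * w j)" if "i \<in> K" "j \<in> K" for i j
    using it[OF that] by simp
  have it1: "integrable N (\<lambda>z. \<Sum>j\<in>K. w i * (indicator S z * (g i z * g j z)) * w j)" if "i \<in> K" for i
    by (rule Bochner_Integration.integrable_sum[where f="\<lambda>j z. w i * (indicator S z * (g i z * g j z)) * w j"]) (rule it2[OF that])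
  have int2: "integrable N (\<lambda>z. \<Sum>i\<in>K. \<Sum>j\<in>K. w i * (indicator S z * (g i z * g j z)) * w j)"
    by (rule Bochner_Integration.integrable_sum[where f="\<lambda>i z. \<Sum>j\<in>K. w i * (indicator S z * (g i z * g j z)) * w j"]) (rule it1)
  then show "integrable N (\<lambda>z. indicator S z * (\<Sum>i\<in>K. w i * g i z)^2)"
    unfolding eq .
  have "(\<integral>z. indicator S z * (\<Sum>i\<in>K. w i * g i z)^2 \<partial>N)
      = (\<integral>z. (\<Sum>i\<in>K. \<Sum>j\<in>K. w i * (indicator S z * (g i z * g j z)) * w j) \<partial>N)"
    unfolding eq ..
  also have "\<dots> = (\<Sum>i\<in>K. \<integral>z. (\<Sum>j\<in>K. w i * (indicator S z * (g i z * g j z)) * w j) \<partial>N)"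
    by (rule Bochner_Integration.integral_sum) (rule it1)
  also have "\<dots> = (\<Sum>i\<in>K. \<Sum>j\<in>K. \<integral>z. w i * (indicator S z * (g i z * g j z)) * w j \<partial>N)"
    by (intro sum.cong refl Bochner_Integration.integral_sum it2)
  also have "\<dots> = qf K (\<lambda>i j. \<integral>z. indicator S z * (g i z * g j z) \<partial>N) w"
    unfolding qf_def by (simp add: integral_mult_right_zero integral_mult_left_zero)
  finally show "qf K (\<lambda>i j. \<integral>z. indicator S z * (g i z * g j z) \<partial>N) w
          = (\<integral>z. indicator S z * (\<Sum>i\<in>K. w i * g i z)^2 \<partial>N)" ..
qed



lemma abs_le_iff2: "\<bar>a - b\<bar> \<le> (r::real) \<longleftrightarrow> b - r \<le> a \<and> a \<le> b + r" by arith
lemma abs_less_iff2: "\<bar>a - b\<bar> < (r::real) \<longleftrightarrow> b - r < a \<and> a < b + r" by arith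

lemma cball_inf_cbox: "cball_inf x r = cbox (\<chi> i. x$i - r) (\<chi> i. x$i + r)"
  unfolding cball_inf_def mem_box_cart set_eq_iff by (simp add: abs_le_iff2)

lemma ball_inf_box: "ball_inf x r = box (\<chi> i. x$i - r) (\<chi> i. x$i + r)"
  unfolding ball_inf_def mem_box_cart set_eq_iff by (simp add: abs_less_iff2)

lemma cball_inf_borel[measurable]: "cball_inf x r \<in> sets borel"
  unfolding cball_inf_cbox by simp
lemma ball_inf_borel[measurable]: "ball_inf x r \<in> sets borel"
  unfolding ball_inf_box by simp

lemma prod_box_cart:
  fixes x :: "real^'n"
  shows "(\<Prod>b\<in>Basis. ((\<chi> i. x$i + r) - (\<chi> i. x$i - r)) \<bullet> b) = (2*r) ^ CARD('n)"
proof -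
  have "((\<chi> i. x$i + r) - (\<chi> i. x$i - r)) \<bullet> b = 2*r" if "b \<in> Basis" for b
    using that by (auto simp: Basis_vec_def inner_axis)
  then have "(\<Prod>b\<in>Basis. ((\<chi> i. x$i + r) - (\<chi> i. x$i - r)) \<bullet> b) = (\<Prod>b\<in>(Basis::(real^'n) set). 2*r)"
    by (rule prod.cong[OF refl])
  also have "\<dots> = (2*r) ^ CARD('n)" by simp
  finally show ?thesis .
qed

lemma emeasure_cball_inf:
  fixes x :: "real^'n"
  assumes "r \<ge> 0"
  shows "emeasure lborel (cball_inf x r) = ennreal ((2*r) ^ CARD('n))"
proof -
  have le: "\<And>b. b \<in> Basis \<Longrightarrow> (\<chi> i. x$i - r) \<bullet> b \<le> (\<chi> i. x$i + r) \<bullet> b"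
    using assms by (auto simp: Basis_vec_def inner_axis)
  show ?thesis unfolding cball_inf_cbox using emeasure_lborel_cbox[OF le] prod_box_cart[of x r] by simp
qed

lemma emeasure_ball_inf:
  fixes x :: "real^'n"
  assumes "r \<ge> 0"
  shows "emeasure lborel (ball_inf x r) = ennreal ((2*r) ^ CARD('n))"
proof -
  have le: "\<And>b. b \<in> Basis \<Longrightarrow> (\<chi> i. x$i - r) \<bullet> b \<le> (\<chi> i. x$i + r) \<bullet> b"
    using assms by (auto simp: Basis_vec_def inner_axis)
  show ?thesis unfolding ball_inf_box using emeasure_lborel_box[OF le] prod_box_cart[of x r] by simp
qed

lemma Phi_meas[measurable]: "(\<lambda>z. Phi x h z \<nu>) \<in> borel_measurable borel"
  unfolding Phi_def by measurable

lemma Phi_bound: "z \<in> cball_inf x h \<Longrightarrow> h > 0 \<Longrightarrow> \<bar>Phi x h z \<nu>\<bar> \<le> 1"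
  unfolding Phi_def cball_inf_def
  by (auto simp: abs_prod power_abs intro!: prod_le_1 power_le_one simp: abs_divide divide_le_eq_1)

lemma Phi_affine: "h \<noteq> 0 \<Longrightarrow> Phi x h (x + h *\<^sub>R u) \<nu> = Phi 0 1 u \<nu>"
  unfolding Phi_def by simp

lemma multi_idx_finite: "finite (multi_idx \<beta> :: ('n::finite \<Rightarrow> nat) set)"
proof -
  define N where "N = nat (\<lceil>\<beta>\<rceil> - 1)"
  have "multi_idx \<beta> \<subseteq> PiE UNIV (\<lambda>_::'n. {..N})"
  proof
    fix \<nu> :: "'n \<Rightarrow> nat" assume "\<nu> \<in> multi_idx \<beta>"
    then have s: "int (\<Sum>j\<in>UNIV. \<nu> j) \<le> \<lceil>\<beta>\<rceil> - 1" by (simp add: multi_idx_def)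
    have "\<nu> i \<le> N" for i
    proof -
      have "\<nu> i \<le> (\<Sum>j\<in>UNIV. \<nu> j)" by (rule member_le_sum) auto
      then show ?thesis using s unfolding N_def by linarith
    qed
    then show "\<nu> \<in> PiE UNIV (\<lambda>_::'n. {..N})" by auto
  qed
  moreover have "finite (PiE UNIV (\<lambda>_::'n. {..N}))" by (rule finite_PiE) auto
  ultimately show ?thesis by (rule finite_subset)
qed

lemma multi_idx_zero: "\<beta> > 0 \<Longrightarrow> (\<lambda>_. 0) \<in> multi_idx \<beta>"
  unfolding multi_idx_def by simp

lemma multi_idx_le1: "\<beta> > 0 \<Longrightarrow> \<beta> \<le> 1 \<Longrightarrow> multi_idx \<beta> = {\<lambda>_. 0}"
proof -
  assume "\<beta> > 0" "\<beta> \<le> 1"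
  then have c: "\<lceil>\<beta>\<rceil> = 1" by linarith
  show ?thesis
  proof (intro set_eqI iffI)
    fix \<nu> :: "'a \<Rightarrow> nat" assume "\<nu> \<in> multi_idx \<beta>"
    then have s: "int (\<Sum>j\<in>UNIV. \<nu> j) \<le> 0" unfolding multi_idx_def c by simp
    have "\<nu> i = 0" for i
    proof -
      have "\<nu> i \<le> (\<Sum>j\<in>UNIV. \<nu> j)" by (rule member_le_sum) auto
      then show ?thesis using s by linarith
    qed
    then show "\<nu> \<in> {\<lambda>_. 0}" by auto
  next
    fix \<nu> :: "'a \<Rightarrow> nat" assume "\<nu> \<in> {\<lambda>_. 0}"
    then show "\<nu> \<in> multi_idx \<beta>" unfolding multi_idx_def c by simp
  qed
qed



lemma nn_affine:
  fixes x :: "real^'n" and g :: "real^'n \<Rightarrow> ennreal"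
  assumes h: "h > 0" and g[measurable]: "g \<in> borel_measurable borel"
  shows "(\<integral>\<^sup>+ z. g z \<partial>lborel) = ennreal (h ^ CARD('n)) * (\<integral>\<^sup>+ u. g (x + h *\<^sub>R u) \<partial>lborel)"
proof -
  have "(\<integral>\<^sup>+ z. g z \<partial>lborel) = (\<integral>\<^sup>+ z. g z \<partial>(density (distr lborel borel (\<lambda>u. x + h *\<^sub>R u)) (\<lambda>_. \<bar>h\<bar> ^ DIM(real^'n))))"
    using arg_cong[OF lborel_affine[of h x], of "\<lambda>M. nn_integral M g"] h by simp
  also have "\<dots> = (\<integral>\<^sup>+ z. \<bar>h\<bar> ^ DIM(real^'n) * g z \<partial>(distr lborel borel (\<lambda>u. x + h *\<^sub>R u)))"
    by (rule nn_integral_density) auto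
  also have "\<dots> = (\<integral>\<^sup>+ u. \<bar>h\<bar> ^ DIM(real^'n) * g (x + h *\<^sub>R u) \<partial>lborel)"
    by (rule nn_integral_distr) auto
  also have "\<dots> = ennreal (h ^ CARD('n)) * (\<integral>\<^sup>+ u. g (x + h *\<^sub>R u) \<partial>lborel)"
    using h by (subst nn_integral_cmult) auto
  finally show ?thesis .
qed


lemma Phi_meas_lborel[measurable]: "(\<lambda>z. Phi x h z \<nu>) \<in> borel_measurable lborel"
  using Phi_meas by (simp add: measurable_lborel1)

lemma Phi_meas_leb: "(\<lambda>z. Phi x h z \<nu>) \<in> borel_measurable lebesgue"
  by (rule measurable_completion) (rule Phi_meas_lborel)

lemma emeasure_leb_borel:
  fixes A :: "'a::euclidean_space set"
  assumes "A \<in> sets borel"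
  shows "emeasure lebesgue A = emeasure lborel A"
proof -
  have "emeasure lebesgue A = (\<integral>\<^sup>+ z. indicator A z \<partial>lebesgue)"
    using assms by (simp add: nn_integral_indicator)
  also have "\<dots> = (\<integral>\<^sup>+ z. indicator A z \<partial>lborel)" by (rule nn_integral_completion)
  also have "\<dots> = emeasure lborel A" using assms by (simp add: nn_integral_indicator)
  finally show ?thesis .
qed

lemma lam_nonneg:
  fixes S :: "(real^'n) set"
  assumes b: "\<beta> > 0" and S: "S \<in> sets lebesgue" "S \<subseteq> cball_inf 0 1"
  shows "lambda_min (multi_idx \<beta> :: ('n \<Rightarrow> nat) set)
           (\<lambda>\<nu> \<nu>'. \<integral>z. indicator S z * (Phi 0 1 z \<nu> * Phi 0 1 z \<nu>') \<partial>lebesgue) \<ge> 0"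
proof -
  let ?K = "multi_idx \<beta> :: ('n \<Rightarrow> nat) set"
  let ?G = "\<lambda>\<nu> \<nu>'. \<integral>z. indicator S z * (Phi 0 1 z \<nu> * Phi 0 1 z \<nu>') \<partial>lebesgue"
  have fin: "finite ?K" by (rule multi_idx_finite)
  have ne: "?K \<noteq> {}" using multi_idx_zero[OF b] by blast
  have sym: "\<forall>i\<in>?K. \<forall>j\<in>?K. ?G i j = ?G j i" by (simp add: mult.commute)
  have fm: "emeasure lebesgue S < \<infinity>"
  proof -
    have "emeasure lebesgue S \<le> emeasure lebesgue (cball_inf (0::real^'n) 1)"
      using S by (intro emeasure_mono) auto
    also have "\<dots> = emeasure lborel (cball_inf (0::real^'n) 1)" by (rule emeasure_leb_borel) simp
    also have "\<dots> < \<infinity>" by (simp add: emeasure_cball_inf)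
    finally show ?thesis .
  qed
  have gm: "\<forall>i\<in>?K. (\<lambda>z. Phi 0 1 z i) \<in> borel_measurable lebesgue" using Phi_meas_leb by blast
  have gb: "\<forall>i\<in>?K. \<forall>z\<in>S. \<bar>Phi 0 1 z i\<bar> \<le> 1" using S(2) Phi_bound[of _ 0 1] by auto
  obtain le: "lambda_min ?K ?G \<in> eigenvalues_on ?K ?G"
    using lambda_min_char[OF fin ne sym] by blast
  then obtain v where v: "\<exists>k\<in>?K. v k \<noteq> 0" "\<forall>k\<in>?K. (\<Sum>j\<in>?K. ?G k j * v j) = lambda_min ?K ?G * v k"
    unfolding eigenvalues_on_def mem_Collect_eq by blast
  have np: "nsq ?K v > 0"
  proof -
    have "nsq ?K v \<noteq> 0" using v(1) nsq_zero[OF fin, of v] by auto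
    then show ?thesis using nsq_nonneg[of ?K v] by linarith
  qed
  have "lambda_min ?K ?G * nsq ?K v = qf ?K ?G v" using qf_eig[OF v(2)] by simp
  also have "\<dots> = (\<integral>z. indicator S z * (\<Sum>i\<in>?K. v i * Phi 0 1 z i)^2 \<partial>lebesgue)"
    by (rule quad_int(1)[OF fin S(1) fm gm gb])
  also have "\<dots> \<ge> 0" by (rule integral_nonneg_AE) auto
  finally show ?thesis using np by (simp add: zero_le_mult_iff)
qed


lemma reg_use:
  fixes M :: "(real^'n) measure"
  assumes "y \<in> reg_set v M f" "0 < s" "s < 1"
  shows "emeasure M (ball_inf y s) \<ge> ennreal (v * s ^ CARD('n)) * (SUP z\<in>ball_inf y ((1 + v) * s). ennreal (f z))"
  using assms unfolding reg_set_def by auto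

lemma center_in_ball: "0 < t \<Longrightarrow> y \<in> ball_inf y t"
  unfolding ball_inf_def by simp

theorem mainTheorem13:
  fixes M :: "(real^'n) measure" and f :: "real^'n \<Rightarrow> real"
    and v \<xi> \<beta> r h :: real and x :: "real^'n"
  assumes "prob_space M"
    and "f \<in> borel_measurable lborel" and "\<And>y. f y \<ge> 0"
    and "M = density lborel (\<lambda>y. ennreal (f y))"
    and "0 < v" "v < 1" "0 < \<xi>" "0 < \<beta>" "0 < r" "r \<le> 1/2"
    and "cball_inf x r \<inter> reg_set v M f \<inter> {y. f y \<ge> \<xi>} \<noteq> {}"
    and "2 * r \<le> h" "h \<le> 1"
  shows "measure M (cball_inf x h) \<ge> v * \<xi> * (h / 2) ^ CARD('n) \<and>
         (\<beta> \<le> 1 \<or> 3 * r \<le> v * h \<longrightarrow>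
         lambda_min (multi_idx \<beta>) (gram M x h) \<ge>
           v * c_min TYPE('n) \<beta> (v / 2 ^ (CARD('n) + 1)) * measure M (cball_inf x h)
             / 2 ^ (3 * CARD('n) + 1))"
proof -
  note ps = assms(1)
  interpret prob_space M by (rule ps)
  have fm[measurable]: "f \<in> borel_measurable borel" using assms(2) by (simp add: measurable_lborel1)
  note f0 = assms(3) and Md = assms(4)
  note vp = assms(5) and v1 = assms(6) and xip = assms(7) and bp = assms(8) and rp = assms(9)
    and r2 = assms(10) and rh = assms(12) and h1 = assms(13)
  define d where "d = CARD('n)"
  define C where "C = cball_inf x h"
  have hp: "h > 0" using rp rh by simp
  obtain y where yC: "y \<in> cball_inf x r" and yR: "y \<in> reg_set v M f" and fy: "f y \<ge> \<xi>"
    using assms(11) by blast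
  have sM: "sets M = sets borel" using Md by simp
  have Csets: "C \<in> sets M" using sM unfolding C_def by simp
  have emC: "emeasure M C = ennreal (measure M C)"
    using emeasure_eq_measure by blast
  have mC0: "measure M C \<ge> 0" by simp
  have emM: "emeasure M A = (\<integral>\<^sup>+ z. ennreal (f z) * indicator A z \<partial>lborel)" if "A \<in> sets borel" for A
    using that Md by (simp add: emeasure_density)
  have part1: "measure M C \<ge> v * \<xi> * (h / 2) ^ d"
  proof -
    have s1: "0 < h/2" "h/2 < 1" using hp h1 by auto
    have "ennreal (v * (h/2) ^ d) * ennreal (f y) \<le>
          ennreal (v * (h/2) ^ d) * (SUP z\<in>ball_inf y ((1 + v) * (h/2)). ennreal (f z))"
    proof (rule mult_left_mono)
      have "y \<in> ball_inf y ((1 + v) * (h/2))" by (rule center_in_ball) (use vp hp in simp)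
      then show "ennreal (f y) \<le> (SUP z\<in>ball_inf y ((1 + v) * (h/2)). ennreal (f z))"
        by (rule SUP_upper)
    qed simp
    also have "\<dots> \<le> emeasure M (ball_inf y (h/2))"
      using reg_use[OF yR s1] unfolding d_def by simp
    also have "\<dots> \<le> emeasure M C"
    proof (rule emeasure_mono)
      show "ball_inf y (h/2) \<subseteq> C"
      proof
        fix z assume z: "z \<in> ball_inf y (h/2)"
        have "\<bar>z$i - x$i\<bar> \<le> h" for i
        proof -
          have "\<bar>z$i - y$i\<bar> < h/2" using z unfolding ball_inf_def by auto
          moreover have "\<bar>y$i - x$i\<bar> \<le> r" using yC unfolding cball_inf_def by auto
          ultimately show ?thesis using rh by linarith
        qed
        then show "z \<in> C" unfolding C_def cball_inf_def by auto
      qed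
    qed (rule Csets)
    finally have "ennreal (v * (h/2) ^ d * f y) \<le> ennreal (measure M C)"
      using emC vp hp f0 by (simp add: ennreal_mult)
    then have "v * (h/2) ^ d * f y \<le> measure M C" by (simp add: ennreal_le_iff)
    moreover have "v * (h/2) ^ d * \<xi> \<le> v * (h/2) ^ d * f y"
      using fy vp hp by (intro mult_left_mono) auto
    ultimately show ?thesis by (simp add: algebra_simps)
  qed
  have part2: "lambda_min (multi_idx \<beta>) (gram M x h) \<ge>
           v * c_min TYPE('n) \<beta> (v / 2 ^ (d + 1)) * measure M C / 2 ^ (3 * d + 1)"
    if cases: "\<beta> \<le> 1 \<or> 3 * r \<le> v * h"
  proof -
    define cm where "cm = c_min TYPE('n) \<beta> (v / 2 ^ (d + 1))"
    have cm1: "cm \<le> 1" unfolding cm_def c_min_def by simp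
    show ?thesis
    proof (cases "\<beta> \<le> 1")
      case True
      define z0 where "z0 = (\<lambda>_::'n. 0::nat)"
      have K: "multi_idx \<beta> = {z0}" unfolding z0_def by (rule multi_idx_le1[OF bp True])
      have P0: "Phi x h z z0 = 1" for z unfolding Phi_def z0_def by simp
      have g: "gram M x h z0 z0 = measure M C"
        unfolding gram_def P0 C_def[symmetric] using Csets by simp
      have "eigenvalues_on {z0} (gram M x h) = {gram M x h z0 z0}"
        unfolding eigenvalues_on_def by auto
      then have "lambda_min (multi_idx \<beta>) (gram M x h) = measure M C"
        unfolding lambda_min_def K g by simp
      moreover have "v * cm * measure M C / 2 ^ (3 * d + 1) \<le> measure M C"
      proof -
        have vc: "v * cm \<le> 1"
        proof (cases "cm \<ge> 0")
          case True
          then have "v * cm \<le> 1 * 1" using cm1 vp v1 by (intro mult_mono) auto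
          then show ?thesis by simp
        next
          case False
          then have "v * cm < 0" using vp by (simp add: mult_pos_neg)
          then show ?thesis by simp
        qed
        define X where "X = v * cm * measure M C"
        have a: "X \<le> measure M C" unfolding X_def
          using mult_right_mono[OF vc mC0] by simp
        have p: "(2::real) ^ (3 * d + 1) \<ge> 1" by (rule one_le_power) simp
        have "X / 2 ^ (3 * d + 1) \<le> measure M C"
        proof (cases "X \<ge> 0")
          case True
          then have "X / 2 ^ (3 * d + 1) \<le> X / 1" using p by (intro divide_left_mono) auto
          then show ?thesis using a by linarith
        next
          case False
          then have "X / 2 ^ (3 * d + 1) \<le> 0" by (simp add: divide_nonpos_pos)
          then show ?thesis using mC0 by linarith
        qed
        then show ?thesis unfolding X_def .
      qed
      ultimately show ?thesis unfolding cm_def by simp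
    next
      case False
      then have c3: "3 * r \<le> v * h" using cases by simp
      define s where "s = h - r"
      have sp: "0 < s" "s < 1" "h / 2 \<le> s" using rp rh h1 unfolding s_def by auto
      define BB where "BB = ball_inf y ((1 + v) * s)"
      define F where "F = (SUP z\<in>BB. ennreal (f z))"
      define B where "B = ball_inf y s"
      have E1: "emeasure M B \<ge> ennreal (v * s ^ d) * F"
        using reg_use[OF yR sp(1,2)] unfolding B_def F_def BB_def d_def .
      have yBB: "y \<in> BB" unfolding BB_def by (rule center_in_ball) (use vp sp in simp)
      have Ffin: "F \<noteq> \<infinity>"
      proof
        assume "F = \<infinity>"
        moreover have "ennreal (v * s ^ d) \<noteq> 0" using vp sp by simp
        ultimately have "ennreal (v * s ^ d) * F = \<infinity>" by (simp add: ennreal_mult_top)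
        then have "emeasure M B = \<infinity>" using E1 by (simp add: top_unique)
        then show False using emeasure_le_1[of B] by simp
      qed
      define Fr where "Fr = enn2real F"
      have FFr: "F = ennreal Fr" unfolding Fr_def using Ffin by (simp add: less_top[symmetric])
      have fle: "f z \<le> Fr" if "z \<in> BB" for z
      proof -
        have "ennreal (f z) \<le> F" unfolding F_def using that by (rule SUP_upper)
        then have "0 \<le> Fr \<and> f z \<le> Fr \<or> f z \<le> 0 \<and> Fr \<le> 0" unfolding FFr by (simp add: ennreal_le_iff2)
        moreover have "Fr \<ge> 0" unfolding Fr_def by simp
        ultimately show ?thesis using f0[of z] by linarith
      qed
      have Frp: "Fr \<ge> \<xi>" using fle[OF yBB] fy by linarith
      have Fr0: "Fr > 0" using Frp xip by linarith
      have yx: "\<bar>y$i - x$i\<bar> \<le> r" for i using yC unfolding cball_inf_def by auto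
      have CBB: "C \<subseteq> BB"
      proof
        fix z assume z: "z \<in> C"
        have "\<bar>z$i - y$i\<bar> < (1 + v) * s" for i
        proof -
          have a: "\<bar>z$i - x$i\<bar> \<le> h" using z unfolding C_def cball_inf_def by auto
          have vr: "v * r < r" using v1 rp by simp
          have e: "(1 + v) * s = h - r + v * h - v * r" unfolding s_def by (simp add: algebra_simps)
          show ?thesis using a yx[of i] vr c3 e by linarith
        qed
        then show "z \<in> BB" unfolding BB_def ball_inf_def by auto
      qed
      have BBB: "B \<subseteq> BB"
      proof
        fix z assume z: "z \<in> B"
        have "\<bar>z$i - y$i\<bar> < (1 + v) * s" for i
        proof -
          have "\<bar>z$i - y$i\<bar> < s" using z unfolding B_def ball_inf_def by auto
          moreover have "s \<le> (1 + v) * s" using vp sp by simp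
          ultimately show ?thesis by linarith
        qed
        then show "z \<in> BB" unfolding BB_def ball_inf_def by auto
      qed
      have BC: "B \<subseteq> C"
      proof
        fix z assume z: "z \<in> B"
        have "\<bar>z$i - x$i\<bar> \<le> h" for i
        proof -
          have "\<bar>z$i - y$i\<bar> < s" using z unfolding B_def ball_inf_def by auto
          then show ?thesis using yx[of i] unfolding s_def by linarith
        qed
        then show "z \<in> C" unfolding C_def cball_inf_def by auto
      qed
      have Cb[measurable]: "C \<in> sets borel" unfolding C_def by simp
      have Bb[measurable]: "B \<in> sets borel" unfolding B_def by simp
      have muC: "measure M C \<le> Fr * (2 * h) ^ d"
      proof -
        have "ennreal (measure M C) = (\<integral>\<^sup>+ z. ennreal (f z) * indicator C z \<partial>lborel)"
          using emC emM[OF Cb] by simp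
        also have "\<dots> \<le> (\<integral>\<^sup>+ z. ennreal Fr * indicator C z \<partial>lborel)"
        proof (rule nn_integral_mono)
          fix z show "ennreal (f z) * indicator C z \<le> ennreal Fr * indicator C z"
            using fle[of z] CBB by (cases "z \<in> C") (auto simp: ennreal_leI)
        qed
        also have "\<dots> = ennreal Fr * emeasure lborel C" by (simp add: nn_integral_cmult_indicator)
        also have "\<dots> = ennreal (Fr * (2 * h) ^ d)"
          unfolding C_def d_def using hp Fr0 by (simp add: emeasure_cball_inf ennreal_mult)
        finally show ?thesis using Fr0 hp by (simp add: ennreal_le_iff)
      qed
      define \<theta> where "\<theta> = v * Fr / 2 ^ (d + 1)"
      have \<theta>0: "\<theta> > 0" unfolding \<theta>_def using vp Fr0 by simp
      define L where "L = {z \<in> B. \<theta> \<le> f z}"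
      have Lb[measurable]: "L \<in> sets borel" unfolding L_def B_def by measurable
      have LB: "L \<subseteq> B" unfolding L_def by auto
      have LebB: "emeasure lborel B = ennreal ((2 * s) ^ d)"
        unfolding B_def d_def using sp by (simp add: emeasure_ball_inf)
      have Lfin: "emeasure lborel L = ennreal (measure lborel L)"
      proof (rule emeasure_eq_ennreal_measure)
        have "emeasure lborel L \<le> emeasure lborel B" using LB by (intro emeasure_mono) auto
        then show "emeasure lborel L \<noteq> \<top>" using LebB by (auto simp: top_unique)
      qed
      have mL: "measure lborel L \<ge> v * s ^ d / 2"
      proof -
        have "ennreal (v * s ^ d) * ennreal Fr \<le> emeasure M B" using E1 FFr by simp
        also have "\<dots> = (\<integral>\<^sup>+ z. ennreal (f z) * indicator B z \<partial>lborel)" by (rule emM[OF Bb])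
        also have "\<dots> \<le> (\<integral>\<^sup>+ z. ennreal Fr * indicator L z + ennreal \<theta> * indicator B z \<partial>lborel)"
        proof (rule nn_integral_mono)
          fix z show "ennreal (f z) * indicator B z \<le> ennreal Fr * indicator L z + ennreal \<theta> * indicator B z"
          proof (cases "z \<in> B")
            case True
            show ?thesis
            proof (cases "z \<in> L")
              case True
              have "f z \<le> Fr" using fle[of z] \<open>z \<in> B\<close> BBB by blast
              then have "ennreal (f z) \<le> ennreal (Fr + \<theta>)" using \<theta>0 by (intro ennreal_leI) linarith
              then show ?thesis using True \<open>z \<in> B\<close> \<theta>0 Fr0 by (simp add: ennreal_plus)
            next
              case False
              then have "f z < \<theta>" using \<open>z \<in> B\<close> unfolding L_def by auto
              then show ?thesis using False \<open>z \<in> B\<close> by (auto simp: ennreal_leI)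
            qed
          next
            case False
            then show ?thesis using LB by auto
          qed
        qed
        also have "\<dots> = ennreal Fr * emeasure lborel L + ennreal \<theta> * emeasure lborel B"
          by (simp add: nn_integral_add nn_integral_cmult_indicator)
        also have "\<dots> = ennreal (Fr * measure lborel L + \<theta> * (2 * s) ^ d)"
          unfolding Lfin LebB using Fr0 \<theta>0 sp by (simp add: ennreal_mult ennreal_plus)
        finally have "ennreal (v * s ^ d * Fr) \<le> ennreal (Fr * measure lborel L + \<theta> * (2 * s) ^ d)"
          using vp sp Fr0 by (simp add: ennreal_mult)
        then have ine: "v * s ^ d * Fr \<le> Fr * measure lborel L + \<theta> * (2 * s) ^ d"
          using Fr0 \<theta>0 sp by (subst (asm) ennreal_le_iff) (auto intro!: add_nonneg_nonneg)
        have "\<theta> * (2 * s) ^ d = v * s ^ d * Fr / 2"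
          unfolding \<theta>_def by (simp add: power_mult_distrib)
        then have "v * s ^ d * Fr / 2 \<le> Fr * measure lborel L" using ine by linarith
        then have "(v * s ^ d / 2) * Fr \<le> measure lborel L * Fr" by (simp add: algebra_simps)
        then show ?thesis using Fr0 by simp
      qed
      define L' where "L' = (\<lambda>u. x + h *\<^sub>R u) -` L"
      have Tm: "(\<lambda>u::real^'n. x + h *\<^sub>R u) \<in> borel \<rightarrow>\<^sub>M borel" by measurable
      have L'b[measurable]: "L' \<in> sets borel"
        using measurable_sets[OF Tm Lb] unfolding L'_def by simp
      have indL: "indicator L (x + h *\<^sub>R u) = (indicator L' u :: ennreal)" for u
        unfolding L'_def by (simp add: indicator_def)
      have mL': "emeasure lborel L = ennreal (h ^ d) * emeasure lborel L'"
      proof -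
        have "emeasure lborel L = (\<integral>\<^sup>+ z. indicator L z \<partial>lborel)" by (simp add: nn_integral_indicator)
        also have "\<dots> = ennreal (h ^ d) * (\<integral>\<^sup>+ u. indicator L (x + h *\<^sub>R u) \<partial>lborel)"
          unfolding d_def by (rule nn_affine[OF hp]) simp
        also have "\<dots> = ennreal (h ^ d) * emeasure lborel L'" unfolding indL by (simp add: nn_integral_indicator)
        finally show ?thesis .
      qed
      have L'sub: "L' \<subseteq> cball_inf 0 1"
      proof
        fix u assume "u \<in> L'"
        then have "x + h *\<^sub>R u \<in> C" using LB BC unfolding L'_def by auto
        then have "\<bar>h * u$i\<bar> \<le> h * 1" for i unfolding C_def cball_inf_def by auto
        then have "\<bar>u$i\<bar> \<le> 1" for i using hp by (simp add: abs_mult)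
        then show "u \<in> cball_inf 0 1" unfolding cball_inf_def by auto
      qed
      have mL'2: "emeasure lebesgue L' \<ge> ennreal (v / 2 ^ (d + 1))"
      proof -
        have hs: "h ^ d * (v / 2 ^ (d + 1)) \<le> v * s ^ d / 2"
        proof -
          have "(h / 2) ^ d \<le> s ^ d" using sp hp by (intro power_mono) auto
          then have "v * (h / 2) ^ d / 2 \<le> v * s ^ d / 2" using vp by simp
          moreover have "h ^ d * (v / 2 ^ (d + 1)) = v * (h / 2) ^ d / 2" by (simp add: power_divide mult.commute)
          ultimately show ?thesis by simp
        qed
        have "ennreal (h ^ d) * ennreal (v / 2 ^ (d + 1)) = ennreal (h ^ d * (v / 2 ^ (d + 1)))"
          using hp vp by (intro ennreal_mult[symmetric]) auto
        also have "\<dots> \<le> ennreal (measure lborel L)" using hs mL by (intro ennreal_leI) linarith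
        also have "\<dots> = ennreal (h ^ d) * emeasure lborel L'" using mL' Lfin by simp
        finally have "ennreal (v / 2 ^ (d + 1)) \<le> emeasure lborel L'"
          using hp by (subst (asm) ennreal_mult_le_mult_iff) auto
        then show ?thesis using emeasure_leb_borel[OF L'b] by simp
      qed
      let ?K = "multi_idx \<beta> :: ('n \<Rightarrow> nat) set"
      let ?G' = "\<lambda>\<nu> \<nu>'. \<integral>z. indicator L' z * (Phi 0 1 z \<nu> * Phi 0 1 z \<nu>') \<partial>lebesgue"
      define Sc where "Sc = {lambda_min (multi_idx \<beta> :: ('n \<Rightarrow> nat) set)
        (\<lambda>\<nu> \<nu>'. \<integral>z. indicator K z * (Phi (0::real^'n) 1 z \<nu> * Phi 0 1 z \<nu>') \<partial>lebesgue) | K.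
        K \<in> sets lebesgue \<and> K \<subseteq> cball_inf (0::real^'n) 1 \<and> emeasure lebesgue K \<ge> ennreal (v / 2 ^ (d + 1))}"
      have cmS: "cm = min 1 (Inf Sc)" unfolding cm_def c_min_def Sc_def d_def ..
      have L'leb: "L' \<in> sets lebesgue" using L'b by simp
      have memb: "lambda_min ?K ?G' \<in> Sc" unfolding Sc_def using L'leb L'sub mL'2 by blast
      have Sc0: "\<forall>a\<in>Sc. 0 \<le> a" unfolding Sc_def using lam_nonneg[OF bp] by blast
      have bdd: "bdd_below Sc" using Sc0 by (auto simp: bdd_below_def)
      have I0: "Inf Sc \<ge> 0" using memb Sc0 by (intro cInf_greatest) auto
      have IL: "Inf Sc \<le> lambda_min ?K ?G'" by (rule cInf_lower[OF memb bdd])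
      have cm0: "cm \<ge> 0" using I0 cmS by simp
      have cmL: "cm \<le> lambda_min ?K ?G'" using IL cmS by simp
      have fin: "finite ?K" by (rule multi_idx_finite)
      have ne: "?K \<noteq> {}" using multi_idx_zero[OF bp] by blast
      have sym: "\<forall>i\<in>?K. \<forall>j\<in>?K. gram M x h i j = gram M x h j i" unfolding gram_def by (simp add: mult.commute)
      have sym': "\<forall>i\<in>?K. \<forall>j\<in>?K. ?G' i j = ?G' j i" by (simp add: mult.commute)
      have gram_eq: "gram M x h = (\<lambda>i j. \<integral>z. indicator C z * (Phi x h z i * Phi x h z j) \<partial>M)"
        unfolding gram_def C_def by (intro ext) simp
      have CM: "emeasure M C < \<infinity>" using emeasure_le_1[of C] by (simp add: le_less_trans)
      have gmM: "\<forall>i\<in>?K. (\<lambda>z. Phi x h z i) \<in> borel_measurable M"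
        unfolding measurable_cong_sets[OF sM refl] using Phi_meas by blast
      have gbM: "\<forall>i\<in>?K. \<forall>z\<in>C. \<bar>Phi x h z i\<bar> \<le> 1" 
      proof (intro ballI)
        fix i z assume "z \<in> C"
        then show "\<bar>Phi x h z i\<bar> \<le> 1" using Phi_bound[of z x h i] hp unfolding C_def by simp
      qed
      have L'fm: "emeasure lebesgue L' < \<infinity>"
      proof -
        have "emeasure lebesgue L' = emeasure lborel L'" by (rule emeasure_leb_borel[OF L'b])
        also have "\<dots> \<le> emeasure lborel (cball_inf (0::real^'n) 1)" using L'sub by (intro emeasure_mono) auto
        also have "\<dots> < \<infinity>" by (simp add: emeasure_cball_inf)
        finally show ?thesis .
      qed
      have gmL: "\<forall>i\<in>?K. (\<lambda>z. Phi 0 1 z i) \<in> borel_measurable lebesgue" using Phi_meas_leb by blast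
      have gbL: "\<forall>i\<in>?K. \<forall>z\<in>L'. \<bar>Phi 0 1 z i\<bar> \<le> 1" 
      proof (intro ballI)
        fix i z assume "z \<in> L'"
        then have "z \<in> cball_inf 0 1" using L'sub by blast
        then show "\<bar>Phi 0 1 z i\<bar> \<le> 1" using Phi_bound[of z 0 1 i] by simp
      qed
      have eigb: "l \<ge> h ^ d * \<theta> * cm" if lE: "l \<in> eigenvalues_on ?K (gram M x h)" for l
      proof -
        obtain w where w: "\<exists>k\<in>?K. w k \<noteq> 0" "\<forall>k\<in>?K. (\<Sum>j\<in>?K. gram M x h k j * w j) = l * w k"
          using lE unfolding eigenvalues_on_def mem_Collect_eq by blast
        have np: "nsq ?K w > 0"
        proof -
          have "nsq ?K w \<noteq> 0" using w(1) nsq_zero[OF fin, of w] by auto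
          then show ?thesis using nsq_nonneg[of ?K w] by linarith
        qed
        define P where "P z = (\<Sum>i\<in>?K. w i * Phi x h z i)" for z
        define P0 where "P0 u = (\<Sum>i\<in>?K. w i * Phi 0 1 u i)" for u
        have Pm[measurable]: "P \<in> borel_measurable borel" unfolding P_def by measurable
        have P0m[measurable]: "P0 \<in> borel_measurable borel" unfolding P0_def by measurable
        have PT: "P (x + h *\<^sub>R u) = P0 u" for u unfolding P_def P0_def
          using Phi_affine[of h x u] hp by (intro sum.cong refl) simp
        have q1: "qf ?K (gram M x h) w = l * nsq ?K w" by (rule qf_eig[OF w(2)])
        have q2: "qf ?K (gram M x h) w = (\<integral>z. indicator C z * (P z)^2 \<partial>M)"
          unfolding gram_eq P_def by (rule quad_int(1)[OF fin Csets CM gmM gbM])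
        have i2: "integrable M (\<lambda>z. indicator C z * (P z)^2)"
          unfolding P_def by (rule quad_int(2)[OF fin Csets CM gmM gbM])
        have q3: "qf ?K ?G' w = (\<integral>z. indicator L' z * (P0 z)^2 \<partial>lebesgue)"
          unfolding P0_def by (rule quad_int(1)[OF fin L'leb L'fm gmL gbL])
        have i3: "integrable lebesgue (\<lambda>z. indicator L' z * (P0 z)^2)"
          unfolding P0_def by (rule quad_int(2)[OF fin L'leb L'fm gmL gbL])
        have indLr: "indicator L (x + h *\<^sub>R u) = (indicator L' u :: real)" for u
          unfolding L'_def by (simp add: indicator_def)
        have qG0: "qf ?K ?G' w \<ge> 0" unfolding q3 by (rule integral_nonneg_AE) auto
        have chain: "ennreal (h ^ d * \<theta> * qf ?K ?G' w) \<le> ennreal (qf ?K (gram M x h) w)"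
        proof -
          have "ennreal (h ^ d * \<theta> * qf ?K ?G' w) = ennreal (h ^ d) * (ennreal \<theta> * ennreal (qf ?K ?G' w))"
            using hp \<theta>0 qG0 by (simp add: ennreal_mult mult.assoc)
          also have "ennreal (qf ?K ?G' w) = (\<integral>\<^sup>+ u. ennreal (indicator L' u * (P0 u)^2) \<partial>lebesgue)"
            unfolding q3 by (rule nn_integral_eq_integral[OF i3, symmetric]) auto
          also have "\<dots> = (\<integral>\<^sup>+ u. ennreal (indicator L' u * (P0 u)^2) \<partial>lborel)"
            by (rule nn_integral_completion)
          also have "ennreal \<theta> * \<dots> = (\<integral>\<^sup>+ u. ennreal \<theta> * ennreal (indicator L' u * (P0 u)^2) \<partial>lborel)"
            by (rule nn_integral_cmult[symmetric]) simp
          also have "\<dots> = (\<integral>\<^sup>+ u. ennreal (\<theta> * (indicator L (x + h *\<^sub>R u) * (P (x + h *\<^sub>R u))^2)) \<partial>lborel)"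
            unfolding indLr PT using \<theta>0 by (intro nn_integral_cong) (simp add: ennreal_mult)
          also have "ennreal (h ^ d) * \<dots> = (\<integral>\<^sup>+ z. ennreal (\<theta> * (indicator L z * (P z)^2)) \<partial>lborel)"
            unfolding d_def by (rule nn_affine[OF hp, symmetric]) simp
          also have "\<dots> \<le> (\<integral>\<^sup>+ z. ennreal (f z) * ennreal (indicator C z * (P z)^2) \<partial>lborel)"
          proof (rule nn_integral_mono)
            fix z
            show "ennreal (\<theta> * (indicator L z * (P z)^2)) \<le> ennreal (f z) * ennreal (indicator C z * (P z)^2)"
            proof (cases "z \<in> L")
              case True
              then have zC: "z \<in> C" using LB BC by blast
              have "\<theta> \<le> f z" using True unfolding L_def by simp
              then have "\<theta> * (P z)^2 \<le> f z * (P z)^2" by (intro mult_right_mono) auto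
              then have "ennreal (\<theta> * (P z)^2) \<le> ennreal (f z * (P z)^2)" by (rule ennreal_leI)
              then show ?thesis using True zC f0[of z] by (simp add: ennreal_mult)
            next
              case False
              then show ?thesis by simp
            qed
          qed
          also have "\<dots> = (\<integral>\<^sup>+ z. ennreal (indicator C z * (P z)^2) \<partial>M)"
            unfolding Md by (rule nn_integral_density[symmetric]) auto
          also have "\<dots> = ennreal (\<integral>z. indicator C z * (P z)^2 \<partial>M)"
            by (rule nn_integral_eq_integral[OF i2]) auto
          also have "\<dots> = ennreal (qf ?K (gram M x h) w)" unfolding q2 ..
          finally show ?thesis .
        qed
        have "h ^ d * \<theta> * qf ?K ?G' w \<le> qf ?K (gram M x h) w"
        proof -
          have "qf ?K (gram M x h) w \<ge> 0" unfolding q2 by (rule integral_nonneg_AE) auto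
          then show ?thesis using chain by (simp add: ennreal_le_iff)
        qed
        moreover have qG: "qf ?K ?G' w \<ge> cm * nsq ?K w"
        proof -
          have "qf ?K ?G' w \<ge> lambda_min ?K ?G' * nsq ?K w" using conjunct2[OF lambda_min_char[OF fin ne sym']] by (rule spec)
          moreover have "lambda_min ?K ?G' * nsq ?K w \<ge> cm * nsq ?K w"
            using cmL np by (intro mult_right_mono) auto
          ultimately show ?thesis by linarith
        qed
        moreover have ht: "h ^ d * \<theta> \<ge> 0" using \<theta>0 hp by simp
        ultimately have "h ^ d * \<theta> * (cm * nsq ?K w) \<le> l * nsq ?K w"
        proof -
          have a: "h ^ d * \<theta> * (cm * nsq ?K w) \<le> h ^ d * \<theta> * qf ?K ?G' w"
            by (rule mult_left_mono[OF \<open>qf ?K ?G' w \<ge> cm * nsq ?K w\<close> ht])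
          show ?thesis using a \<open>h ^ d * \<theta> * qf ?K ?G' w \<le> qf ?K (gram M x h) w\<close> q1 by linarith
        qed
        then have "(h ^ d * \<theta> * cm) * nsq ?K w \<le> l * nsq ?K w" by (simp add: algebra_simps)
        then show ?thesis using np by simp
      qed
      have neE: "eigenvalues_on ?K (gram M x h) \<noteq> {}" using lambda_min_char[OF fin ne sym] by blast
      have lb: "lambda_min ?K (gram M x h) \<ge> h ^ d * \<theta> * cm"
        unfolding lambda_min_def by (rule cInf_greatest[OF neE eigb])
      have "v * cm * measure M C / 2 ^ (3 * d + 1) \<le> h ^ d * \<theta> * cm"
      proof -
        have P0: "v * cm \<ge> 0" using vp cm0 by simp
        have "v * cm * measure M C / 2 ^ (3 * d + 1) \<le> v * cm * (Fr * (2 * h) ^ d) / 2 ^ (3 * d + 1)"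
          using mult_left_mono[OF muC P0] by (intro divide_right_mono) auto
        also have "\<dots> = (v * cm * Fr * h ^ d / 2 ^ (d + 1)) / 2 ^ d"
        proof -
          have n: "3 * d + 1 = d + (d + (d + 1))" by simp
          have e: "(2::real) ^ (3 * d + 1) = 2 ^ d * (2 ^ d * 2 ^ (d + 1))"
            by (simp only: n power_add)
          show ?thesis unfolding e by (simp add: power_mult_distrib)
        qed
        also have "\<dots> \<le> (v * cm * Fr * h ^ d / 2 ^ (d + 1)) / 1"
          using P0 Fr0 hp by (intro divide_left_mono) (auto intro!: one_le_power)
        also have "\<dots> = h ^ d * \<theta> * cm" unfolding \<theta>_def by simp
        finally show ?thesis .
      qed
      then show ?thesis using lb unfolding cm_def by linarith
    qed
  qed
  show ?thesis using part1 part2 unfolding C_def d_def by blast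
qed

end
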